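(* In the setting below, every chain $Z$ in $\tilde H$ is a simple path, i.e. no vertex of $H$ appears on $Z$ more than once.
   Context: Setting: $G$ is a graph; $S_1,T_1,S_2,T_2\subseteq V(G)$ are pairwise disjoint sets of $k$ vertices each, all of degree $1$ in $G$, with $(S_1,T_1)$ and $(S_2,T_2)$ each routable in $G$ (connected by $k$ node-disjoint paths). $H$ is an $(S_1,T_1,S_2,T_2)$-minimal minor of $G$: a minor of $G$ containing the vertices of $S_1\cup T_1\cup S_2\cup T_2$ as vertices (each with singleton branch set), in which both pairs are routable, and such that deleting or contracting any edge of $H$ destroys one of these properties. $\mathcal{R}$ (red paths) is a set of $k$ node-disjoint paths routing $(S_1,T_1)$ in $H$, and $\mathcal{B}$ (blue paths) is a set of $k$ node-disjoint paths routing $(S_2,T_2)$ in $H$. $\tilde H$ is the directed graph on $V(H)$ whose edges are the edges of red paths directed from $S_1$ toward $T_1$ (red edges) and the edges of blue paths directed from $S_2$ toward $T_2$ (blue edges). A chain is a directed (not necessarily simple) walk $e_1,e_2,\dots,e_r$ in $\tilde H$ whose edges alternate in color (all odd-indexed edges red and all even-indexed blue, or vice versa). *)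

theory Defs
  imports Main
begin

definition graph :: "'a set \<Rightarrow> 'a set set \<Rightarrow> bool" where
  "graph V E \<longleftrightarrow> finite V \<and> (\<forall>e\<in>E. card e = 2 \<and> e \<subseteq> V)"

definition degree :: "'a set set \<Rightarrow> 'a \<Rightarrow> nat" where
  "degree E v = card {e\<in>E. v \<in> e}"

definition walk :: "'a set \<Rightarrow> 'a set set \<Rightarrow> 'a list \<Rightarrow> bool" where
  "walk V E P \<longleftrightarrow> P \<noteq> [] \<and> set P \<subseteq> V \<and>
     (\<forall>i. Suc i < length P \<longrightarrow> {P ! i, P ! Suc i} \<in> E)"

definition path :: "'a set \<Rightarrow> 'a set set \<Rightarrow> 'a list \<Rightarrow> bool" where
  "path V E P \<longleftrightarrow> walk V E P \<and> distinct P"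

definition connected_set :: "'a set \<Rightarrow> 'a set set \<Rightarrow> 'a set \<Rightarrow> bool" where
  "connected_set V E X \<longleftrightarrow> (\<forall>x\<in>X. \<forall>y\<in>X. \<exists>P. path V E P \<and> set P \<subseteq> X \<and>
       hd P = x \<and> last P = y)"

text \<open>A routing of (S,T) in (V,E): a set of k pairwise node-disjoint paths,
  each going from a vertex of S to a vertex of T (the list order gives the
  direction from S towards T).\<close>
definition routing :: "'a set \<Rightarrow> 'a set set \<Rightarrow> 'a set \<Rightarrow> 'a set \<Rightarrow> nat \<Rightarrow> 'a list set \<Rightarrow> bool" where
  "routing V E S T k R \<longleftrightarrow> finite R \<and> card R = k \<and>
     (\<forall>P\<in>R. path V E P \<and> hd P \<in> S \<and> last P \<in> T) \<and>
     (\<forall>P\<in>R. \<forall>Q\<in>R. P \<noteq> Q \<longrightarrow> set P \<inter> set Q = {})"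

definition routable :: "'a set \<Rightarrow> 'a set set \<Rightarrow> 'a set \<Rightarrow> 'a set \<Rightarrow> nat \<Rightarrow> bool" where
  "routable V E S T k \<longleftrightarrow> (\<exists>R. routing V E S T k R)"

definition minor_model :: "'a set \<Rightarrow> 'a set set \<Rightarrow> 'a set \<Rightarrow> 'a set set \<Rightarrow> ('a \<Rightarrow> 'a set) \<Rightarrow> bool" where
  "minor_model VG EG VH EH \<beta> \<longleftrightarrow>
     (\<forall>v\<in>VH. \<beta> v \<noteq> {} \<and> \<beta> v \<subseteq> VG \<and> connected_set VG EG (\<beta> v)) \<and>
     (\<forall>u\<in>VH. \<forall>v\<in>VH. u \<noteq> v \<longrightarrow> \<beta> u \<inter> \<beta> v = {}) \<and>
     (\<forall>u v. {u, v} \<in> EH \<longrightarrow> (\<exists>x\<in>\<beta> u. \<exists>y\<in>\<beta> v. {x, y} \<in> EG))"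

text \<open>The properties that a (S1,T1,S2,T2)-minimal minor must have and that
  are destroyed by deleting or contracting any edge.\<close>
definition good_minor ::
  "'a set \<Rightarrow> 'a set set \<Rightarrow> 'a set \<Rightarrow> 'a set \<Rightarrow> 'a set \<Rightarrow> 'a set \<Rightarrow> nat \<Rightarrow>
   'a set \<Rightarrow> 'a set set \<Rightarrow> ('a \<Rightarrow> 'a set) \<Rightarrow> bool" where
  "good_minor VG EG S1 T1 S2 T2 k VH EH \<beta> \<longleftrightarrow>
     graph VH EH \<and> minor_model VG EG VH EH \<beta> \<and>
     (\<forall>t \<in> S1 \<union> T1 \<union> S2 \<union> T2. t \<in> VH \<and> \<beta> t = {t}) \<and>
     routable VH EH S1 T1 k \<and> routable VH EH S2 T2 k"

text \<open>Contraction of the edge {u,v}: v is merged into u (the merged vertex keeps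
  the name u and receives the union of both branch sets); loops are removed and
  parallel edges identified.\<close>
definition contract_V :: "'a set \<Rightarrow> 'a \<Rightarrow> 'a \<Rightarrow> 'a set" where
  "contract_V VH u v = VH - {v}"

definition contract_E :: "'a set set \<Rightarrow> 'a \<Rightarrow> 'a \<Rightarrow> 'a set set" where
  "contract_E EH u v = {e'. \<exists>e\<in>EH. e' = (\<lambda>x. if x = v then u else x) ` e \<and> card e' = 2}"

definition contract_branch :: "('a \<Rightarrow> 'a set) \<Rightarrow> 'a \<Rightarrow> 'a \<Rightarrow> ('a \<Rightarrow> 'a set)" where
  "contract_branch \<beta> u v = \<beta>(u := \<beta> u \<union> \<beta> v)"

definition minimal_minor ::
  "'a set \<Rightarrow> 'a set set \<Rightarrow> 'a set \<Rightarrow> 'a set \<Rightarrow> 'a set \<Rightarrow> 'a set \<Rightarrow> nat \<Rightarrow>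
   'a set \<Rightarrow> 'a set set \<Rightarrow> ('a \<Rightarrow> 'a set) \<Rightarrow> bool" where
  "minimal_minor VG EG S1 T1 S2 T2 k VH EH \<beta> \<longleftrightarrow>
     good_minor VG EG S1 T1 S2 T2 k VH EH \<beta> \<and>
     (\<forall>e\<in>EH. \<not> good_minor VG EG S1 T1 S2 T2 k VH (EH - {e}) \<beta>) \<and>
     (\<forall>u v. {u, v} \<in> EH \<longrightarrow>
        \<not> good_minor VG EG S1 T1 S2 T2 k (contract_V VH u v) (contract_E EH u v)
            (contract_branch \<beta> u v))"

text \<open>Coloured directed edges of H-tilde: red edges follow red paths, blue edges
  follow blue paths, each in list order.\<close>
definition dir_edge :: "'a list set \<Rightarrow> 'a \<Rightarrow> 'a \<Rightarrow> bool" where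
  "dir_edge R u v \<longleftrightarrow> (\<exists>P\<in>R. \<exists>i. Suc i < length P \<and> P ! i = u \<and> P ! Suc i = v)"

text \<open>A chain, given by the sequence of its vertices x0,...,xr (r \<ge> 1) and the
  colour c of the first edge (True = red): edge i (from x_i to x_(i+1)) has the
  colour c for even i and the other colour for odd i.\<close>
definition chain :: "'a list set \<Rightarrow> 'a list set \<Rightarrow> bool \<Rightarrow> 'a list \<Rightarrow> bool" where
  "chain R B c xs \<longleftrightarrow> length xs \<ge> 2 \<and>
     (\<forall>i. Suc i < length xs \<longrightarrow>
        (if (even i \<longleftrightarrow> c) then dir_edge R (xs ! i) (xs ! Suc i)
         else dir_edge B (xs ! i) (xs ! Suc i)))"

end

theory Submission
  imports Defs
begin

lemma walk_succ: "walk V E P \<longleftrightarrow> P \<noteq> [] \<and> set P \<subseteq> V \<and> successively (\<lambda>x y. {x,y} \<in> E) P"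
  unfolding walk_def successively_conv_nth by simp

lemma path_succ: "path V E P \<longleftrightarrow> P \<noteq> [] \<and> set P \<subseteq> V \<and> successively (\<lambda>x y. {x,y} \<in> E) P \<and> distinct P"
  unfolding path_def walk_succ by simp

lemma routing_path: "routing V E S T k R \<Longrightarrow> P \<in> R \<Longrightarrow> path V E P"
  unfolding routing_def by blast

lemma routing_disj: "routing V E S T k R \<Longrightarrow> P \<in> R \<Longrightarrow> Q \<in> R \<Longrightarrow> x \<in> set P \<Longrightarrow> x \<in> set Q \<Longrightarrow> P = Q"
  unfolding routing_def by blast

lemma de_edge:
  assumes "routing V E S T k R" "dir_edge R a b"
  shows "{a,b} \<in> E \<and> a \<in> V \<and> b \<in> V \<and> a \<noteq> b"
proof -
  obtain P i where P: "P \<in> R" "Suc i < length P" "P ! i = a" "P ! Suc i = b"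
    using assms(2) unfolding dir_edge_def by blast
  have pp: "path V E P" using routing_path[OF assms(1) P(1)] .
  hence "{a,b} \<in> E" using P unfolding path_def walk_def by auto
  moreover have "a \<in> V" "b \<in> V" using pp P unfolding path_def walk_def
    by (auto dest: nth_mem)
  moreover have "a \<noteq> b" using pp P unfolding path_def
    by (metis Suc_lessD n_not_Suc_n nth_eq_iff_index_eq)
  ultimately show ?thesis by blast
qed

lemma de_succ_unique:
  assumes "routing V E S T k R" "dir_edge R a b" "dir_edge R a b'"
  shows "b = b'"
proof -
  obtain P i where P: "P \<in> R" "Suc i < length P" "P ! i = a" "P ! Suc i = b"
    using assms(2) unfolding dir_edge_def by blast
  obtain Q j where Q: "Q \<in> R" "Suc j < length Q" "Q ! j = a" "Q ! Suc j = b'"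
    using assms(3) unfolding dir_edge_def by blast
  have "P = Q" using routing_disj[OF assms(1) P(1) Q(1), of a] P Q
    by (metis Suc_lessD nth_mem)
  moreover have "distinct P" using routing_path[OF assms(1) P(1)] unfolding path_def by blast
  ultimately have "i = j" using P Q by (metis Suc_lessD nth_eq_iff_index_eq)
  thus ?thesis using P Q \<open>P = Q\<close> by simp
qed

lemma de_pred_unique:
  assumes "routing V E S T k R" "dir_edge R a b" "dir_edge R a' b"
  shows "a = a'"
proof -
  obtain P i where P: "P \<in> R" "Suc i < length P" "P ! i = a" "P ! Suc i = b"
    using assms(2) unfolding dir_edge_def by blast
  obtain Q j where Q: "Q \<in> R" "Suc j < length Q" "Q ! j = a'" "Q ! Suc j = b"
    using assms(3) unfolding dir_edge_def by blast
  have "P = Q" using routing_disj[OF assms(1) P(1) Q(1), of b] P Q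
    by (metis nth_mem)
  moreover have "distinct P" using routing_path[OF assms(1) P(1)] unfolding path_def by blast
  ultimately have "i = j" using P Q by (metis Suc_inject nth_eq_iff_index_eq)
  thus ?thesis using P Q \<open>P = Q\<close> by simp
qed

lemma de_no2cycle:
  assumes "routing V E S T k R" "dir_edge R a b" "dir_edge R b a"
  shows False
proof -
  obtain P i where P: "P \<in> R" "Suc i < length P" "P ! i = a" "P ! Suc i = b"
    using assms(2) unfolding dir_edge_def by blast
  obtain Q j where Q: "Q \<in> R" "Suc j < length Q" "Q ! j = b" "Q ! Suc j = a"
    using assms(3) unfolding dir_edge_def by blast
  have "P = Q" using routing_disj[OF assms(1) P(1) Q(1), of b] P Q
    by (metis Suc_lessD nth_mem)
  moreover have "distinct P" using routing_path[OF assms(1) P(1)] unfolding path_def by blast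
  ultimately have "j = Suc i" "i = Suc j" using P Q
    by (metis Suc_lessD nth_eq_iff_index_eq)+
  thus False by simp
qed

lemma de_no_cycle:
  assumes "routing V E S T k R" "L > 0" "\<And>t. t < L \<Longrightarrow> dir_edge R (y t) (y (Suc t))" "y L = y 0"
  shows False
proof -
  obtain P i where P: "P \<in> R" "Suc i < length P" "P ! i = y 0" "P ! Suc i = y 1"
    using assms(3)[of 0] assms(2) unfolding dir_edge_def by auto
  have dP: "distinct P" using routing_path[OF assms(1) P(1)] unfolding path_def by blast
  have "\<forall>n\<le>L. i + n < length P \<and> y n = P ! (i + n)"
  proof (intro allI impI)
    fix n assume "n \<le> L" thus "i + n < length P \<and> y n = P ! (i + n)"
    proof (induction n)
      case 0 thus ?case using P by simp
    next
      case (Suc n)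
      hence ih: "i + n < length P" "y n = P ! (i + n)" by auto
      obtain Q j where Q: "Q \<in> R" "Suc j < length Q" "Q ! j = y n" "Q ! Suc j = y (Suc n)"
        using assms(3)[of n] Suc.prems unfolding dir_edge_def by auto
      have "P = Q" using routing_disj[OF assms(1) P(1) Q(1), of "y n"] ih Q
        by (metis Suc_lessD nth_mem)
      hence "j = i + n" using ih Q dP by (metis Suc_lessD nth_eq_iff_index_eq)
      thus ?case using Q \<open>P = Q\<close> by simp
    qed
  qed
  hence "y L = P ! (i + L)" "i + L < length P" by auto
  hence "P ! (i + L) = P ! i" using assms(4) P by simp
  hence "i + L = i" using dP \<open>i + L < length P\<close> P(2) by (simp add: nth_eq_iff_index_eq)
  thus False using assms(2) by simp
qed

lemma routing_len2:
  assumes "routing V E S T k R" "S \<inter> T = {}" "P \<in> R"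
  shows "length P \<ge> 2"
proof -
  have "P \<noteq> []" "hd P \<in> S" "last P \<in> T" using assms unfolding routing_def path_def walk_def by auto
  hence "hd P \<noteq> last P" using assms(2) by auto
  thus ?thesis using \<open>P \<noteq> []\<close>
    by (cases P; cases "tl P"; auto)
qed

lemma routing_hd_img:
  assumes "routing V E S T k R" "finite S" "card S = k"
  shows "hd ` R = S"
proof -
  have fin: "finite R" "card R = k" using assms unfolding routing_def by auto
  have ne: "\<And>P. P \<in> R \<Longrightarrow> P \<noteq> []" using assms unfolding routing_def path_def walk_def by auto
  have "inj_on hd R"
  proof (rule inj_onI)
    fix P Q assume "P \<in> R" "Q \<in> R" "hd P = hd Q"
    thus "P = Q" using routing_disj[OF assms(1), of P Q "hd P"] ne by (metis hd_in_set)
  qed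
  hence "card (hd ` R) = k" using fin by (simp add: card_image)
  moreover have "hd ` R \<subseteq> S" using assms unfolding routing_def by auto
  ultimately show ?thesis using assms by (metis card_subset_eq)
qed

lemma routing_last_img:
  assumes "routing V E S T k R" "finite T" "card T = k"
  shows "last ` R = T"
proof -
  have fin: "finite R" "card R = k" using assms unfolding routing_def by auto
  have ne: "\<And>P. P \<in> R \<Longrightarrow> P \<noteq> []" using assms unfolding routing_def path_def walk_def by auto
  have "inj_on last R"
  proof (rule inj_onI)
    fix P Q assume "P \<in> R" "Q \<in> R" "last P = last Q"
    thus "P = Q" using routing_disj[OF assms(1), of P Q "last P"] ne by (metis last_in_set)
  qed
  hence "card (last ` R) = k" using fin by (simp add: card_image)
  moreover have "last ` R \<subseteq> T" using assms unfolding routing_def by auto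
  ultimately show ?thesis using assms by (metis card_subset_eq)
qed

lemma S_no_pred:
  assumes "routing V E S T k R" "finite S" "card S = k" "s \<in> S" "dir_edge R w s"
  shows False
proof -
  obtain Q where Q: "Q \<in> R" "hd Q = s" using routing_hd_img[OF assms(1-3)] assms(4) by force
  obtain P i where P: "P \<in> R" "Suc i < length P" "P ! i = w" "P ! Suc i = s"
    using assms(5) unfolding dir_edge_def by blast
  have "Q \<noteq> []" using assms(1) Q unfolding routing_def path_def walk_def by auto
  hence "P = Q" using routing_disj[OF assms(1) P(1) Q(1), of s] P Q
    by (metis hd_in_set nth_mem)
  moreover have "distinct P" using routing_path[OF assms(1) P(1)] unfolding path_def by blast
  moreover have "P ! 0 = s" using Q \<open>Q \<noteq> []\<close> \<open>P = Q\<close> by (simp add: hd_conv_nth)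
  ultimately show False using P by (metis Zero_not_Suc nth_eq_iff_index_eq zero_less_Suc less_trans)
qed

lemma T_no_succ:
  assumes "routing V E S T k R" "finite T" "card T = k" "t \<in> T" "dir_edge R t z"
  shows False
proof -
  obtain Q where Q: "Q \<in> R" "last Q = t" using routing_last_img[OF assms(1-3)] assms(4) by force
  obtain P i where P: "P \<in> R" "Suc i < length P" "P ! i = t" "P ! Suc i = z"
    using assms(5) unfolding dir_edge_def by blast
  have "Q \<noteq> []" using assms(1) Q unfolding routing_def path_def walk_def by auto
  have "t \<in> set P" using P by (metis Suc_lessD nth_mem)
  moreover have "t \<in> set Q" using Q \<open>Q \<noteq> []\<close> by auto
  ultimately have "P = Q" using routing_disj[OF assms(1) P(1) Q(1)] by blast
  have dP: "distinct P" using routing_path[OF assms(1) P(1)] unfolding path_def by blast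
  have "P ! (length P - 1) = t" using Q \<open>Q \<noteq> []\<close> \<open>P = Q\<close> by (simp add: last_conv_nth)
  hence "P ! (length P - 1) = P ! i" using P by simp
  moreover have "length P - 1 < length P" "i < length P" using P(2) by auto
  ultimately have "length P - 1 = i" using dP nth_eq_iff_index_eq by blast
  thus False using P(2) by simp
qed

lemma S_succ:
  assumes "routing V E S T k R" "finite S" "card S = k" "S \<inter> T = {}" "s \<in> S"
  shows "\<exists>z. dir_edge R s z"
proof -
  obtain Q where Q: "Q \<in> R" "hd Q = s" using routing_hd_img[OF assms(1-3)] assms(5) by force
  have l: "length Q \<ge> 2" using routing_len2[OF assms(1,4) Q(1)] .
  hence "Q \<noteq> []" by auto
  hence "Q ! 0 = s" using Q by (simp add: hd_conv_nth)
  moreover have "Suc 0 < length Q" using l by simp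
  ultimately show ?thesis using Q unfolding dir_edge_def by blast
qed

lemma mid_succ:
  assumes "routing V E S T k R" "dir_edge R w v" "v \<notin> T"
  shows "\<exists>z. dir_edge R v z"
proof -
  obtain P i where P: "P \<in> R" "Suc i < length P" "P ! i = w" "P ! Suc i = v"
    using assms(2) unfolding dir_edge_def by blast
  have "last P \<in> T" using assms(1) P(1) unfolding routing_def by auto
  have "Suc i \<noteq> length P - 1"
  proof
    assume "Suc i = length P - 1"
    moreover have "P \<noteq> []" using P(2) by auto
    ultimately have "last P = v" using P(4) by (simp add: last_conv_nth)
    thus False using \<open>last P \<in> T\<close> assms(3) by simp
  qed
  hence "Suc (Suc i) < length P" using P(2) by linarith
  thus ?thesis using P unfolding dir_edge_def by blast
qed

lemma flow_routing:
  fixes N :: "'a \<Rightarrow> 'a \<Rightarrow> bool"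
  assumes finV: "finite V"
    and Nin: "\<And>a b. N a b \<Longrightarrow> a \<in> V \<and> b \<in> V \<and> {a,b} \<in> E"
    and fn: "\<And>a b b'. N a b \<Longrightarrow> N a b' \<Longrightarrow> b = b'"
    and inj: "\<And>a a' b. N a b \<Longrightarrow> N a' b \<Longrightarrow> a = a'"
    and Sout: "\<And>s. s \<in> S \<Longrightarrow> \<exists>b. N s b"
    and Snoin: "\<And>s a. s \<in> S \<Longrightarrow> \<not> N a s"
    and Tnout: "\<And>t b. t \<in> T \<Longrightarrow> \<not> N t b"
    and bal: "\<And>a v. N a v \<Longrightarrow> (\<exists>b. N v b) \<or> v \<in> T"
    and finS: "finite S" and cS: "card S = k"
  shows "routable V E S T k"
proof -
  define nx where "nx x = (THE y. N x y)" for x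
  have nx: "N x y \<Longrightarrow> nx x = y" for x y unfolding nx_def using fn by blast
  define sq where "sq s n = (nx ^^ n) s" for s n
  have sq0: "sq s 0 = s" for s by (simp add: sq_def)
  have sqS: "sq s (Suc n) = nx (sq s n)" for s n by (simp add: sq_def)
  define ok where "ok s n \<longleftrightarrow> (\<forall>i<n. \<exists>b. N (sq s i) b)" for s n
  have okN: "ok s n \<Longrightarrow> i < n \<Longrightarrow> N (sq s i) (sq s (Suc i))" for s n i
    unfolding ok_def using nx sqS by metis
  have bk: "\<And>j. ok s i \<Longrightarrow> ok s' j \<Longrightarrow> i \<le> j \<Longrightarrow> sq s i = sq s' j \<Longrightarrow> s = sq s' (j - i)" for s s' i
  proof (induction i)
    case 0 thus ?case using sq0 by simp
  next
    case (Suc i j)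
    obtain j' where j: "j = Suc j'" using Suc.prems(3) by (cases j) auto
    have ok1: "ok s i" using Suc.prems(1) unfolding ok_def by auto
    have ok2: "ok s' j'" using Suc.prems(2) j unfolding ok_def by auto
    have "N (sq s i) (sq s (Suc i))" using okN[OF Suc.prems(1)] by simp
    moreover have "N (sq s' j') (sq s' j)" using okN[OF Suc.prems(2)] j by simp
    ultimately have "sq s i = sq s' j'" using inj Suc.prems(4) by metis
    from Suc.IH[OF ok1 ok2 _ this] Suc.prems(3) j show ?case by simp
  qed
  have eq: "s \<in> S \<Longrightarrow> s' \<in> S \<Longrightarrow> ok s i \<Longrightarrow> ok s' j \<Longrightarrow> sq s i = sq s' j \<Longrightarrow> i = j \<and> s = s'"
    for s s' i j
  proof -
    assume a: "s \<in> S" "s' \<in> S" "ok s i" "ok s' j" "sq s i = sq s' j"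
    have gen: "\<And>s s' i j. s \<in> S \<Longrightarrow> s' \<in> S \<Longrightarrow> ok s i \<Longrightarrow> ok s' j \<Longrightarrow> sq s i = sq s' j \<Longrightarrow> i \<le> j \<Longrightarrow> i = j \<and> s = s'"
    proof -
      fix s s' i j assume b: "s \<in> S" "s' \<in> S" "ok s i" "ok s' j" "sq s i = sq s' j" "i \<le> j"
      have s: "s = sq s' (j - i)" using bk[OF b(3,4,6,5)] .
      show "i = j \<and> s = s'"
      proof (cases "i = j")
        case True thus ?thesis using s sq0 by simp
      next
        case False
        then obtain d where d: "j - i = Suc d" "d < j" using b(6) by (metis Suc_diff_Suc le_neq_implies_less diff_less_Suc less_trans_Suc Suc_le_lessD le_less_trans diff_le_self zero_less_Suc)
        have "N (sq s' d) (sq s' (Suc d))" using okN[OF b(4) d(2)] .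
        hence "N (sq s' d) s" using s d by simp
        thus ?thesis using Snoin b(1) by blast
      qed
    qed
    show ?thesis
    proof (cases "i \<le> j")
      case True thus ?thesis using gen a by blast
    next
      case False thus ?thesis using gen[of s' s j i] a by auto
    qed
  qed
  have sqV: "s \<in> S \<Longrightarrow> ok s n \<Longrightarrow> sq s n \<in> V" for s n
  proof (cases n)
    case 0 assume "s \<in> S" thus ?thesis using 0 sq0 Sout Nin by metis
  next
    case (Suc m) assume "ok s n" thus ?thesis using okN[of s n m] Suc Nin by auto
  qed
  have exm: "s \<in> S \<Longrightarrow> \<exists>m. \<not> (\<exists>b. N (sq s m) b)" for s
  proof (rule ccontr)
    assume s: "s \<in> S" and c: "\<not> (\<exists>m. \<not> (\<exists>b. N (sq s m) b))"
    hence okall: "ok s n" for n unfolding ok_def by blast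
    have "inj (sq s)" using eq[OF s s okall okall] by (meson injI)
    moreover have "range (sq s) \<subseteq> V" using sqV[OF s okall] by blast
    ultimately have "finite (UNIV :: nat set)" using finV by (meson finite_imageD finite_subset)
    thus False by simp
  qed
  define m where "m s = (LEAST m. \<not> (\<exists>b. N (sq s m) b))" for s
  have m1: "s \<in> S \<Longrightarrow> \<not> (\<exists>b. N (sq s (m s)) b)" for s
  proof -
    assume "s \<in> S"
    then obtain m0 where "\<not> (\<exists>b. N (sq s m0) b)" using exm by blast
    thus ?thesis unfolding m_def by (rule LeastI)
  qed
  have m2: "s \<in> S \<Longrightarrow> ok s (m s)" for s
    unfolding ok_def m_def using not_less_Least by blast
  have mpos: "s \<in> S \<Longrightarrow> m s > 0" for s
    using m1 Sout sq0 by (metis gr0I)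
  define P where "P s = map (sq s) [0..<Suc (m s)]" for s
  have Pn: "i < length (P s) \<Longrightarrow> P s ! i = sq s i" for s i
    unfolding P_def by (simp del: upt_Suc)
  have Pl: "length (P s) = Suc (m s)" for s unfolding P_def by simp
  have Pset: "set (P s) = sq s ` {..m s}" for s unfolding P_def
    by (simp del: upt_Suc add: lessThan_Suc_atMost[symmetric] atLeast0LessThan)
  have okle: "ok s n \<Longrightarrow> i \<le> n \<Longrightarrow> ok s i" for s n i unfolding ok_def by auto
  have Ppath: "s \<in> S \<Longrightarrow> path V E (P s) \<and> hd (P s) = s \<and> last (P s) \<in> T" for s
  proof -
    assume s: "s \<in> S"
    have ne: "P s \<noteq> []" using Pl by (metis Zero_not_Suc list.size(3))
    have "set (P s) \<subseteq> V" using Pset sqV[OF s] okle[OF m2[OF s]] by auto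
    moreover have "\<forall>i. Suc i < length (P s) \<longrightarrow> {P s ! i, P s ! Suc i} \<in> E"
      using Pn Pl okN[OF m2[OF s]] Nin by auto
    moreover have "distinct (P s)"
    proof -
      have "inj_on (sq s) {..m s}"
        using eq[OF s s] okle[OF m2[OF s]] by (meson atMost_iff inj_onI)
      thus ?thesis unfolding P_def
        by (simp add: distinct_map del: upt_Suc add: lessThan_Suc_atMost[symmetric] atLeast0LessThan)
    qed
    moreover have "hd (P s) = s" using Pn ne sq0 by (simp add: hd_conv_nth)
    moreover have "last (P s) \<in> T"
    proof -
      have "last (P s) = sq s (m s)" using ne Pn Pl by (simp add: last_conv_nth)
      moreover obtain d where d: "m s = Suc d" using mpos[OF s] by (cases "m s") auto
      have "N (sq s d) (sq s (m s))" using okN[OF m2[OF s]] d by simp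
      ultimately show ?thesis using bal m1[OF s] by metis
    qed
    ultimately show ?thesis using ne unfolding path_def walk_def by blast
  qed
  have Pdisj: "s \<in> S \<Longrightarrow> s' \<in> S \<Longrightarrow> x \<in> set (P s) \<Longrightarrow> x \<in> set (P s') \<Longrightarrow> s = s'" for s s' x
    using Pset eq okle m2 by (smt (verit) atMost_iff imageE)
  have injP: "inj_on P S"
    by (rule inj_onI) (metis Ppath)
  have "routing V E S T k (P ` S)"
    unfolding routing_def
  proof (intro conjI)
    show "finite (P ` S)" using finS by simp
    show "card (P ` S) = k" using card_image[OF injP] cS by simp
    show "\<forall>Pa\<in>P ` S. path V E Pa \<and> hd Pa \<in> S \<and> last Pa \<in> T" using Ppath by auto
    show "\<forall>Pa\<in>P ` S. \<forall>Q\<in>P ` S. Pa \<noteq> Q \<longrightarrow> set Pa \<inter> set Q = {}" using Pdisj by blast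
  qed
  thus ?thesis unfolding routable_def by blast
qed

lemma routing_del:
  assumes "routing V E S T k R" "\<And>a b. dir_edge R a b \<Longrightarrow> {a,b} \<noteq> e"
  shows "routing V (E - {e}) S T k R"
  unfolding routing_def
proof (intro conjI)
  show "finite R" "card R = k" "\<forall>P\<in>R. \<forall>Q\<in>R. P \<noteq> Q \<longrightarrow> set P \<inter> set Q = {}"
    using assms(1) unfolding routing_def by auto
  show "\<forall>P\<in>R. path V (E - {e}) P \<and> hd P \<in> S \<and> last P \<in> T"
  proof
    fix P assume P: "P \<in> R"
    have "path V E P" "hd P \<in> S" "last P \<in> T" using assms(1) P unfolding routing_def by auto
    moreover have "\<forall>i. Suc i < length P \<longrightarrow> {P ! i, P ! Suc i} \<noteq> e"
      using assms(2) P unfolding dir_edge_def by blast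
    ultimately show "path V (E - {e}) P \<and> hd P \<in> S \<and> last P \<in> T"
      unfolding path_def walk_def by auto
  qed
qed

lemma good_minor_del:
  assumes "good_minor VG EG S1 T1 S2 T2 k VH EH \<beta>"
    "routable VH (EH - {e}) S1 T1 k" "routable VH (EH - {e}) S2 T2 k"
  shows "good_minor VG EG S1 T1 S2 T2 k VH (EH - {e}) \<beta>"
  using assms unfolding good_minor_def graph_def minor_model_def by auto

lemma cycle_delete_contra:
  assumes mm: "minimal_minor VG EG S1 T1 S2 T2 k VH EH \<beta>"
    and R: "routing VH EH S1 T1 k R" and B: "routing VH EH S2 T2 k B"
    and fS: "finite S1" "card S1 = k" and fT: "finite T1" "card T1 = k" and ST: "S1 \<inter> T1 = {}"
    and L3: "L \<ge> 3"
    and yinj: "\<And>a b. a < L \<Longrightarrow> b < L \<Longrightarrow> y a = y b \<Longrightarrow> a = b"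
    and yL: "y L = y 0"
    and red: "\<And>t. t < L \<Longrightarrow> even t \<Longrightarrow> dir_edge R (y t) (y (Suc t))"
    and blue: "\<And>t. t < L \<Longrightarrow> odd t \<Longrightarrow> dir_edge B (y t) (y (Suc t))"
  shows False
proof -
  note uR = de_succ_unique[OF R] and pR = de_pred_unique[OF R]
  note uB = de_succ_unique[OF B] and pB = de_pred_unique[OF B]
  have revB: "\<not> dir_edge B (y (Suc t)) (y t)" if t: "t < L" "even t" for t
  proof
    assume rb: "dir_edge B (y (Suc t)) (y t)"
    show False
    proof (cases "Suc t < L")
      case True
      hence "odd (Suc t)" using t by simp
      hence "dir_edge B (y (Suc t)) (y (Suc (Suc t)))" using blue True by blast
      hence e: "y t = y (Suc (Suc t))" using uB rb by blast
      show False
      proof (cases "Suc (Suc t) < L")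
        case True thus False using yinj[OF t(1) True e] by simp
      next
        case False
        hence "Suc (Suc t) = L" using \<open>Suc t < L\<close> by simp
        hence "y t = y 0" using e yL by simp
        hence "t = 0" using yinj t L3 by simp
        thus False using \<open>Suc (Suc t) = L\<close> L3 by simp
      qed
    next
      case False
      hence tL: "Suc t = L" using t by simp
      then obtain d where d: "t = Suc d" using L3 by (cases t) auto
      have "odd d" "d < L" using d t tL by auto
      hence "dir_edge B (y d) (y t)" using blue d by blast
      moreover have "dir_edge B (y 0) (y t)" using rb tL yL by simp
      ultimately have "y d = y 0" using pB by blast
      hence "d = 0" using yinj \<open>d < L\<close> L3 by simp
      thus False using \<open>odd d\<close> by simp
    qed
  qed
  obtain t0 where t0: "t0 < L" "even t0" "\<not> dir_edge B (y t0) (y (Suc t0))"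
  proof -
    have "\<exists>t0. t0 < L \<and> even t0 \<and> \<not> dir_edge B (y t0) (y (Suc t0))"
    proof (rule ccontr)
      assume "\<not> ?thesis"
      hence "\<And>t. t < L \<Longrightarrow> dir_edge B (y t) (y (Suc t))" using blue by blast
      thus False using de_no_cycle[OF B, of L y] L3 yL by simp
    qed
    thus ?thesis using that by blast
  qed
  define e where "e = {y t0, y (Suc t0)}"
  have eB: "{a,b} \<noteq> e" if "dir_edge B a b" for a b
    using that t0 revB[OF t0(1,2)] unfolding e_def by (auto simp: doubleton_eq_iff)
  have eEH: "e \<in> EH" using de_edge[OF R red[OF t0(1,2)]] unfolding e_def by blast
  define rem where "rem a b \<longleftrightarrow> (\<exists>t<L. even t \<and> a = y t \<and> b = y (Suc t))" for a b
  define add where "add a b \<longleftrightarrow> (\<exists>t<L. odd t \<and> a = y (Suc t) \<and> b = y t)" for a b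
  define N where "N a b \<longleftrightarrow> (dir_edge R a b \<and> \<not> rem a b) \<or> add a b" for a b
  define sc where "sc t = (if Suc t = L then 0 else Suc t)" for t
  have sc: "t < L \<Longrightarrow> sc t < L \<and> y (Suc t) = y (sc t)" for t
    unfolding sc_def using yL L3 by auto
  have scinj: "t < L \<Longrightarrow> t' < L \<Longrightarrow> sc t = sc t' \<Longrightarrow> t = t'" for t t'
    unfolding sc_def by (auto split: if_splits)
  have K1: "\<exists>z. dir_edge R (y (Suc t)) z \<and> rem (y (Suc t)) z" if "odd t" "t < L" for t
  proof -
    have u: "sc t < L" "y (Suc t) = y (sc t)" using sc that by auto
    have "even (sc t)" unfolding sc_def using that by auto
    hence "dir_edge R (y (sc t)) (y (Suc (sc t)))" "rem (y (sc t)) (y (Suc (sc t)))"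
      using red u unfolding rem_def by blast+
    thus ?thesis using u by auto
  qed
  have K2: "dir_edge R (y (t - 1)) (y t) \<and> rem (y (t - 1)) (y t)" if o: "odd t" "t < L" for t
  proof -
    obtain d where d: "t = Suc d" using o by (cases t) auto
    have "even d" "d < L" using d o by auto
    thus ?thesis using red d unfolding rem_def by auto
  qed
  have H: "(\<exists>b. add v b) \<or> (even (L - 1) \<and> dir_edge R (y (L - 1)) v \<and> rem (y (L - 1)) v)"
    if "v = y t" "even t" "t < L" for v t
  proof (cases "t = 0")
    case False
    then obtain d where d: "t = Suc d" by (cases t) auto
    hence "odd d" "d < L" using that by auto
    hence "add v (y d)" unfolding add_def using that d by blast
    thus ?thesis by blast
  next
    case True
    obtain d where d: "L = Suc d" using L3 by (cases L) auto
    show ?thesis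
    proof (cases "odd d")
      case True
      hence "add v (y d)" unfolding add_def using that \<open>t = 0\<close> d yL by auto
      thus ?thesis by blast
    next
      case False
      hence "dir_edge R (y d) (y L)" "rem (y d) (y L)" using red d unfolding rem_def by auto
      thus ?thesis using False d yL that \<open>t = 0\<close> by auto
    qed
  qed
  have Nfn: "b = b'" if "N a b" "N a b'" for a b b'
  proof -
    have c1: False if h: "dir_edge R a b" "\<not> rem a b" "add a b'" for a b b'
    proof -
      obtain t where t: "t < L" "odd t" "a = y (Suc t)" using h(3) unfolding add_def by blast
      obtain z where "dir_edge R a z" "rem a z" using K1[OF t(2,1)] t by blast
      thus False using uR h by blast
    qed
    have c2: "b = b'" if h: "add a b" "add a b'" for b b'
    proof -
      obtain t where t: "t < L" "odd t" "a = y (Suc t)" "b = y t" using h(1) unfolding add_def by blast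
      obtain t' where t': "t' < L" "odd t'" "a = y (Suc t')" "b' = y t'" using h(2) unfolding add_def by blast
      have "y (sc t) = y (sc t')" using sc t t' by metis
      hence "sc t = sc t'" using yinj sc t(1) t'(1) by blast
      hence "t = t'" using scinj t(1) t'(1) by blast
      thus ?thesis using t t' by simp
    qed
    show ?thesis using that c1 c2 uR unfolding N_def by metis
  qed
  have Ninj: "a = a'" if "N a b" "N a' b" for a a' b
  proof -
    have c1: False if h: "dir_edge R a b" "\<not> rem a b" "add a' b" for a a'
    proof -
      obtain t where t: "t < L" "odd t" "b = y t" using h(3) unfolding add_def by blast
      thus False using K2[OF t(2,1)] pR h by blast
    qed
    have c2: "a = a'" if h: "add a b" "add a' b" for a a'
    proof -
      obtain t where t: "t < L" "odd t" "a = y (Suc t)" "b = y t" using h(1) unfolding add_def by blast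
      obtain t' where t': "t' < L" "odd t'" "a' = y (Suc t')" "b = y t'" using h(2) unfolding add_def by blast
      have "t = t'" using yinj t t' by metis
      thus ?thesis using t t' by simp
    qed
    show ?thesis using that c1 c2 pR unfolding N_def by metis
  qed
  have Sout: "\<exists>b. N s b" if s: "s \<in> S1" for s
  proof -
    obtain z where z: "dir_edge R s z" using S_succ[OF R fS ST s] by blast
    show ?thesis
    proof (cases "rem s z")
      case False thus ?thesis using z unfolding N_def by blast
    next
      case True
      then obtain t where "t < L" "even t" "s = y t" unfolding rem_def by blast
      from H[OF this(3,2,1)] show ?thesis
        using S_no_pred[OF R fS s] unfolding N_def by blast
    qed
  qed
  have Snoin: "\<not> N a s" if s: "s \<in> S1" for s a
  proof
    assume "N a s"
    moreover have "\<not> dir_edge R a s" using S_no_pred[OF R fS s] by blast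
    ultimately obtain t where "t < L" "odd t" "s = y t" unfolding N_def add_def by blast
    thus False using K2 S_no_pred[OF R fS s] by blast
  qed
  have Tnout: "\<not> N v b" if v: "v \<in> T1" for v b
  proof
    assume "N v b"
    moreover have nr: "\<And>z. \<not> dir_edge R v z" using T_no_succ[OF R fT v] by blast
    ultimately obtain t where "t < L" "odd t" "v = y (Suc t)" unfolding N_def add_def by blast
    thus False using K1 nr by blast
  qed
  have bal: "(\<exists>b. N v b) \<or> v \<in> T1" if "N a v" for a v
  proof (rule ccontr)
    assume c: "\<not> ((\<exists>b. N v b) \<or> v \<in> T1)"
    show False
    proof (cases "add a v")
      case True
      then obtain t where t: "t < L" "odd t" "v = y t" unfolding add_def by blast
      obtain z where z: "dir_edge R v z" using mid_succ[OF R, of "y (t-1)" v] K2[OF t(2,1)] t c by blast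
      have "\<not> rem v z"
      proof
        assume "rem v z"
        then obtain t' where "t' < L" "even t'" "v = y t'" unfolding rem_def by blast
        thus False using yinj t by metis
      qed
      thus False using z c unfolding N_def by blast
    next
      case False
      hence av: "dir_edge R a v" "\<not> rem a v" using that unfolding N_def by auto
      obtain z where z: "dir_edge R v z" using mid_succ[OF R av(1)] c by blast
      have "rem v z" using z c unfolding N_def by blast
      then obtain t where t: "t < L" "even t" "v = y t" unfolding rem_def by blast
      from H[OF t(3,2,1)] show False
        using c av pR unfolding N_def by blast
    qed
  qed
  have Nin: "a \<in> VH \<and> b \<in> VH \<and> {a,b} \<in> EH - {e}" if "N a b" for a b
  proof (cases "add a b")
    case True
    then obtain t where t: "t < L" "odd t" "a = y (Suc t)" "b = y t" unfolding add_def by blast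
    have "dir_edge B b a" using blue t by simp
    hence base: "a \<in> VH \<and> b \<in> VH \<and> {a,b} \<in> EH" using de_edge[OF B] by (metis insert_commute)
    have "{a,b} \<noteq> e"
    proof
      assume "{a,b} = e"
      hence "(a = y t0 \<and> b = y (Suc t0)) \<or> (a = y (Suc t0) \<and> b = y t0)"
        unfolding e_def by (auto simp: doubleton_eq_iff)
      thus False
      proof
        assume h: "a = y t0 \<and> b = y (Suc t0)"
        hence "y t = y (sc t0)" using t sc t0 by metis
        hence tt: "t = sc t0" using yinj sc t0 t by blast
        show False
        proof (cases "Suc t0 = L")
          case True thus False using tt t unfolding sc_def by simp
        next
          case False
          hence tt': "t = Suc t0" using tt unfolding sc_def by simp
          hence e2: "y (Suc (Suc t0)) = y t0" using h t by simp
          show False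
          proof (cases "Suc (Suc t0) < L")
            case True thus False using yinj[OF True t0(1) e2] by simp
          next
            case False
            hence "Suc (Suc t0) = L" using tt' t by simp
            hence "y t0 = y 0" using e2 yL by simp
            hence "t0 = 0" using yinj t0 L3 by simp
            thus False using \<open>Suc (Suc t0) = L\<close> L3 by simp
          qed
        qed
      next
        assume "a = y (Suc t0) \<and> b = y t0"
        hence "t = t0" using yinj t t0 by metis
        thus False using t t0 by simp
      qed
    qed
    thus ?thesis using base by blast
  next
    case False
    hence ab: "dir_edge R a b" "\<not> rem a b" using that unfolding N_def by auto
    have base: "a \<in> VH \<and> b \<in> VH \<and> {a,b} \<in> EH" using de_edge[OF R ab(1)] by blast
    have "{a,b} \<noteq> e"
    proof
      assume "{a,b} = e"
      hence "(a = y t0 \<and> b = y (Suc t0)) \<or> (a = y (Suc t0) \<and> b = y t0)"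
        unfolding e_def by (auto simp: doubleton_eq_iff)
      thus False
      proof
        assume "a = y t0 \<and> b = y (Suc t0)"
        thus False using ab t0 unfolding rem_def by blast
      next
        assume "a = y (Suc t0) \<and> b = y t0"
        thus False using ab de_no2cycle[OF R] red[OF t0(1,2)] by blast
      qed
    qed
    thus ?thesis using base by blast
  qed
  have finVH: "finite VH" using mm unfolding minimal_minor_def good_minor_def graph_def by blast
  have r1: "routable VH (EH - {e}) S1 T1 k"
    by (rule flow_routing[where N = N, OF finVH Nin Nfn Ninj Sout Snoin Tnout bal fS]) auto
  have r2: "routable VH (EH - {e}) S2 T2 k"
    using routing_del[OF B eB] unfolding routable_def by blast
  have "good_minor VG EG S1 T1 S2 T2 k VH (EH - {e}) \<beta>"
    using good_minor_del[OF _ r1 r2] mm unfolding minimal_minor_def by blast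
  thus False using mm eEH unfolding minimal_minor_def by blast
qed

lemma split2: "Suc i < length P \<Longrightarrow> P = take i P @ [P!i, P!Suc i] @ drop (Suc (Suc i)) P"
  by (simp add: Cons_nth_drop_Suc)

lemma ce_keep: "graph VH EH \<Longrightarrow> {c,d} \<in> EH \<Longrightarrow> c \<noteq> b \<Longrightarrow> d \<noteq> b \<Longrightarrow> {c,d} \<in> contract_E EH a b"
  unfolding contract_E_def graph_def by (rule CollectI, rule bexI[of _ "{c,d}"]) auto

lemma ce_move: "graph VH EH \<Longrightarrow> {c,b} \<in> EH \<Longrightarrow> c \<noteq> a \<Longrightarrow> c \<noteq> b \<Longrightarrow> {c,a} \<in> contract_E EH a b"
  unfolding contract_E_def graph_def by (rule CollectI, rule bexI[of _ "{c,b}"]) auto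

lemma contract_path:
  assumes g: "graph VH EH" and p: "path VH EH P" and h: "hd P \<noteq> b" "last P \<noteq> b" and ab: "a \<noteq> b"
    and dec: "b \<in> set P \<Longrightarrow> (\<exists>xs ys. P = xs @ [a,b] @ ys \<or> P = xs @ [b,a] @ ys)"
  shows "path (VH - {b}) (contract_E EH a b) (removeAll b P) \<and> hd (removeAll b P) = hd P \<and> last (removeAll b P) = last P"
proof (cases "b \<in> set P")
  case False
  hence rP: "removeAll b P = P" by simp
  have s: "successively (\<lambda>x y. {x,y} \<in> EH) P" "P \<noteq> []" "set P \<subseteq> VH" "distinct P"
    using p unfolding path_succ by auto
  have "successively (\<lambda>x y. {x,y} \<in> contract_E EH a b) P"
    by (rule successively_mono[OF s(1)]) (use ce_keep[OF g] False in metis)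
  thus ?thesis using rP s False unfolding path_succ by auto
next
  case True
  have s: "successively (\<lambda>x y. {x,y} \<in> EH) P" "P \<noteq> []" "set P \<subseteq> VH" "distinct P"
    using p unfolding path_succ by auto
  let ?E = "\<lambda>x y. {x,y} \<in> EH" and ?C = "\<lambda>x y. {x,y} \<in> contract_E EH a b"
  obtain xs ys where d: "P = xs @ [a,b] @ ys \<or> P = xs @ [b,a] @ ys" using dec True by blast
  thus ?thesis
  proof
    assume P: "P = xs @ [a,b] @ ys"
    have nb: "b \<notin> set xs" "b \<notin> set ys" "a \<notin> set xs" "a \<notin> set ys" using s(4) P by auto
    have rP: "removeAll b P = xs @ [a] @ ys" using P nb ab by simp
    have s1: "successively ?E xs" "xs \<noteq> [] \<Longrightarrow> ?E (last xs) a" "ys \<noteq> [] \<Longrightarrow> ?E b (hd ys)"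
      "successively ?E ys"
      using s(1) unfolding P by (auto simp: successively_append_iff successively_Cons)
    have c1: "successively ?C xs"
      by (rule successively_mono[OF s1(1)]) (use ce_keep[OF g] nb in metis)
    have c2: "successively ?C ys"
      by (rule successively_mono[OF s1(4)]) (use ce_keep[OF g] nb in metis)
    have c3: "xs \<noteq> [] \<Longrightarrow> ?C (last xs) a" using ce_keep[OF g] s1(2) nb ab by (metis last_in_set)
    have c4: "ys \<noteq> [] \<Longrightarrow> ?C a (hd ys)"
    proof -
      assume ne: "ys \<noteq> []"
      have "{hd ys, b} \<in> EH" using s1(3)[OF ne] by (simp add: insert_commute)
      moreover have "hd ys \<noteq> a" "hd ys \<noteq> b" using nb ne by (metis hd_in_set)+
      ultimately have "{hd ys, a} \<in> contract_E EH a b" using ce_move[OF g] by blast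
      thus ?thesis by (simp add: insert_commute)
    qed
    have "successively ?C (xs @ [a] @ ys)"
      using c1 c2 c3 c4 by (auto simp: successively_append_iff successively_Cons)
    moreover have "set (xs @ [a] @ ys) \<subseteq> VH - {b}" using s(3) P nb ab by auto
    moreover have "distinct (xs @ [a] @ ys)" using s(4) P by auto
    moreover have "hd (xs @ [a] @ ys) = hd P" using P by (cases xs) auto
    moreover have "last (xs @ [a] @ ys) = last P" using P h(2) by (cases ys rule: rev_cases) auto
    ultimately show ?thesis unfolding path_succ rP by auto
  next
    assume P: "P = xs @ [b,a] @ ys"
    have nb: "b \<notin> set xs" "b \<notin> set ys" "a \<notin> set xs" "a \<notin> set ys" using s(4) P by auto
    have rP: "removeAll b P = xs @ [a] @ ys" using P nb ab by simp
    have s1: "successively ?E xs" "xs \<noteq> [] \<Longrightarrow> ?E (last xs) b" "ys \<noteq> [] \<Longrightarrow> ?E a (hd ys)"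
      "successively ?E ys"
      using s(1) unfolding P by (auto simp: successively_append_iff successively_Cons)
    have c1: "successively ?C xs"
      by (rule successively_mono[OF s1(1)]) (use ce_keep[OF g] nb in metis)
    have c2: "successively ?C ys"
      by (rule successively_mono[OF s1(4)]) (use ce_keep[OF g] nb in metis)
    have c3: "xs \<noteq> [] \<Longrightarrow> ?C (last xs) a"
    proof -
      assume ne: "xs \<noteq> []"
      have "last xs \<noteq> a" "last xs \<noteq> b" using nb ne by (metis last_in_set)+
      thus ?thesis using ce_move[OF g] s1(2)[OF ne] by blast
    qed
    have c4: "ys \<noteq> [] \<Longrightarrow> ?C a (hd ys)" using ce_keep[OF g] s1(3) nb ab by (metis hd_in_set)
    have "successively ?C (xs @ [a] @ ys)"
      using c1 c2 c3 c4 by (auto simp: successively_append_iff successively_Cons)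
    moreover have "set (xs @ [a] @ ys) \<subseteq> VH - {b}" using s(3) P nb ab by auto
    moreover have "distinct (xs @ [a] @ ys)" using s(4) P by auto
    moreover have "hd (xs @ [a] @ ys) = hd P" using P h(1) by (cases xs) auto
    moreover have "last (xs @ [a] @ ys) = last P" using P by (cases ys rule: rev_cases) auto
    ultimately show ?thesis unfolding path_succ rP by auto
  qed
qed

lemma contract_routing:
  assumes g: "graph VH EH" and R: "routing VH EH S T k R" and ab: "a \<noteq> b"
    and bS: "b \<notin> S" and bT: "b \<notin> T"
    and adj: "dir_edge R a b \<or> dir_edge R b a"
  shows "routing (VH - {b}) (contract_E EH a b) S T k (removeAll b ` R)"
proof -
  have key: "path (VH - {b}) (contract_E EH a b) (removeAll b P) \<and> hd (removeAll b P) = hd P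
      \<and> last (removeAll b P) = last P \<and> hd P \<in> S \<and> last P \<in> T" if P: "P \<in> R" for P
  proof -
    have pp: "path VH EH P" "hd P \<in> S" "last P \<in> T" using R P unfolding routing_def by auto
    have "b \<in> set P \<Longrightarrow> (\<exists>xs ys. P = xs @ [a,b] @ ys \<or> P = xs @ [b,a] @ ys)"
    proof -
      assume bP: "b \<in> set P"
      obtain Q i where Q: "Q \<in> R" "Suc i < length Q"
        "(Q ! i = a \<and> Q ! Suc i = b) \<or> (Q ! i = b \<and> Q ! Suc i = a)"
        using adj unfolding dir_edge_def by blast
      have "b \<in> set Q" using Q by (metis Suc_lessD nth_mem)
      hence "Q = P" using routing_disj[OF R Q(1) P _ bP] by simp
      thus ?thesis using split2[OF Q(2)] Q(3) by metis
    qed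
    moreover have "hd P \<noteq> b" "last P \<noteq> b" using pp bS bT by auto
    ultimately show ?thesis using contract_path[OF g pp(1) _ _ ab] pp by blast
  qed
  have ne: "P \<in> R \<Longrightarrow> P \<noteq> []" for P using R unfolding routing_def path_def walk_def by auto
  have inj: "inj_on (removeAll b) R"
  proof (rule inj_onI)
    fix P Q assume PQ: "P \<in> R" "Q \<in> R" "removeAll b P = removeAll b Q"
    hence "hd P = hd Q" using key by metis
    thus "P = Q" using routing_disj[OF R PQ(1,2), of "hd P"] ne PQ by (metis hd_in_set)
  qed
  show ?thesis unfolding routing_def
  proof (intro conjI)
    show "finite (removeAll b ` R)" using R unfolding routing_def by auto
    show "card (removeAll b ` R) = k" using card_image[OF inj] R unfolding routing_def by auto
    show "\<forall>P\<in>removeAll b ` R. path (VH - {b}) (contract_E EH a b) P \<and> hd P \<in> S \<and> last P \<in> T"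
      using key by auto
    show "\<forall>P\<in>removeAll b ` R. \<forall>Q\<in>removeAll b ` R. P \<noteq> Q \<longrightarrow> set P \<inter> set Q = {}"
      using R unfolding routing_def by fastforce
  qed
qed

lemma path_app:
  assumes "path V E P" "path V E Q" "set P \<inter> set Q = {}" "{last P, hd Q} \<in> E"
  shows "path V E (P @ Q)"
  using assms unfolding path_succ by (auto simp: successively_append_iff)

lemma conn_union:
  assumes X: "connected_set V E X" and Y: "connected_set V E Y" and d: "X \<inter> Y = {}"
    and x0: "x0 \<in> X" and y0: "y0 \<in> Y" and e: "{x0,y0} \<in> E"
  shows "connected_set V E (X \<union> Y)"
  unfolding connected_set_def
proof (intro ballI)
  fix x y assume xy: "x \<in> X \<union> Y" "y \<in> X \<union> Y"
  have ne: "path V E P \<Longrightarrow> P \<noteq> []" for P unfolding path_def walk_def by auto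
  show "\<exists>P. path V E P \<and> set P \<subseteq> X \<union> Y \<and> hd P = x \<and> last P = y"
  proof (cases "x \<in> X")
    case xX: True
    show ?thesis
    proof (cases "y \<in> X")
      case True thus ?thesis using X xX unfolding connected_set_def by blast
    next
      case False
      hence yY: "y \<in> Y" using xy by auto
      obtain P where P: "path V E P" "set P \<subseteq> X" "hd P = x" "last P = x0" using X xX x0 unfolding connected_set_def by blast
      obtain Q where Q: "path V E Q" "set Q \<subseteq> Y" "hd Q = y0" "last Q = y" using Y yY y0 unfolding connected_set_def by blast
      have "path V E (P @ Q)" using path_app[OF P(1) Q(1)] P Q d e by auto
      moreover have "hd (P @ Q) = x" "last (P @ Q) = y" using P Q ne by auto
      ultimately show ?thesis using P Q by (intro exI[of _ "P @ Q"]) auto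
    qed
  next
    case False
    hence xY: "x \<in> Y" using xy by auto
    show ?thesis
    proof (cases "y \<in> Y")
      case True thus ?thesis using Y xY unfolding connected_set_def by blast
    next
      case False
      hence yX: "y \<in> X" using xy by auto
      obtain Q where Q: "path V E Q" "set Q \<subseteq> Y" "hd Q = x" "last Q = y0" using Y xY y0 unfolding connected_set_def by blast
      obtain P where P: "path V E P" "set P \<subseteq> X" "hd P = x0" "last P = y" using X yX x0 unfolding connected_set_def by blast
      have "{y0, x0} \<in> E" using e by (simp add: insert_commute)
      hence "path V E (Q @ P)" using path_app[OF Q(1) P(1)] P Q d by auto
      moreover have "hd (Q @ P) = x" "last (Q @ P) = y" using P Q ne by auto
      ultimately show ?thesis using P Q by (intro exI[of _ "Q @ P"]) auto
    qed
  qed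
qed

lemma contract_good:
  assumes gm: "good_minor VG EG S1 T1 S2 T2 k VH EH \<beta>" and e: "{a,b} \<in> EH"
    and na: "a \<notin> S1 \<union> T1 \<union> S2 \<union> T2" and nb: "b \<notin> S1 \<union> T1 \<union> S2 \<union> T2"
    and r1: "routable (VH - {b}) (contract_E EH a b) S1 T1 k"
    and r2: "routable (VH - {b}) (contract_E EH a b) S2 T2 k"
  shows "good_minor VG EG S1 T1 S2 T2 k (contract_V VH a b) (contract_E EH a b) (contract_branch \<beta> a b)"
proof -
  have g: "graph VH EH" and mm: "minor_model VG EG VH EH \<beta>"
    and trm: "\<forall>t \<in> S1 \<union> T1 \<union> S2 \<union> T2. t \<in> VH \<and> \<beta> t = {t}"
    using gm unfolding good_minor_def by auto
  have card2: "card {a,b} = 2" "{a,b} \<subseteq> VH" using g e unfolding graph_def by auto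
  hence ab: "a \<noteq> b" "a \<in> VH" "b \<in> VH" by auto
  let ?f = "\<lambda>x. if x = b then a else x"
  let ?\<beta> = "contract_branch \<beta> a b"
  have g': "graph (VH - {b}) (contract_E EH a b)"
    unfolding graph_def
  proof (rule conjI)
    show "finite (VH - {b})" using g unfolding graph_def by auto
  next
    show "\<forall>e'\<in>contract_E EH a b. card e' = 2 \<and> e' \<subseteq> VH - {b}"
    proof
    fix e' assume "e' \<in> contract_E EH a b"
    then obtain e where "e \<in> EH" "e' = ?f ` e" "card e' = 2" unfolding contract_E_def by blast
    moreover have "e \<subseteq> VH" using g \<open>e \<in> EH\<close> unfolding graph_def by auto
    ultimately show "card e' = 2 \<and> e' \<subseteq> VH - {b}" using ab by auto
  qed
  qed
  have bsub: "\<beta> c \<subseteq> ?\<beta> (?f c)" for c unfolding contract_branch_def by auto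
  have mm': "minor_model VG EG (VH - {b}) (contract_E EH a b) ?\<beta>"
    unfolding minor_model_def
  proof (intro conjI)
    show "\<forall>v\<in>VH - {b}. ?\<beta> v \<noteq> {} \<and> ?\<beta> v \<subseteq> VG \<and> connected_set VG EG (?\<beta> v)"
    proof
      fix v assume v: "v \<in> VH - {b}"
      show "?\<beta> v \<noteq> {} \<and> ?\<beta> v \<subseteq> VG \<and> connected_set VG EG (?\<beta> v)"
      proof (cases "v = a")
        case False thus ?thesis using mm v unfolding minor_model_def contract_branch_def by auto
      next
        case True
        obtain x y where xy: "x \<in> \<beta> a" "y \<in> \<beta> b" "{x,y} \<in> EG" using mm e unfolding minor_model_def by blast
        have "connected_set VG EG (\<beta> a \<union> \<beta> b)"
          by (rule conn_union[OF _ _ _ xy]) (use mm ab in \<open>auto simp: minor_model_def\<close>)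
        thus ?thesis using True mm ab unfolding minor_model_def contract_branch_def by auto
      qed
    qed
    show "\<forall>u\<in>VH - {b}. \<forall>v\<in>VH - {b}. u \<noteq> v \<longrightarrow> ?\<beta> u \<inter> ?\<beta> v = {}"
    proof (intro ballI impI)
      fix u v assume uv: "u \<in> VH - {b}" "v \<in> VH - {b}" "u \<noteq> v"
      have dj: "\<And>u v. u \<in> VH \<Longrightarrow> v \<in> VH \<Longrightarrow> u \<noteq> v \<Longrightarrow> \<beta> u \<inter> \<beta> v = {}"
        using mm unfolding minor_model_def by blast
      show "?\<beta> u \<inter> ?\<beta> v = {}"
        using dj[of a v] dj[of b v] dj[of u a] dj[of u b] dj[of u v] uv ab
        by (auto simp: contract_branch_def)
    qed
    show "\<forall>u v. {u, v} \<in> contract_E EH a b \<longrightarrow> (\<exists>x\<in>?\<beta> u. \<exists>y\<in>?\<beta> v. {x, y} \<in> EG)"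
    proof (intro allI impI)
      fix u v assume "{u,v} \<in> contract_E EH a b"
      then obtain e where e: "e \<in> EH" "{u,v} = ?f ` e" unfolding contract_E_def by blast
      obtain c d where cd: "e = {c,d}" using g e(1) unfolding graph_def by (meson card_2_iff)
      obtain x y where xy: "x \<in> \<beta> c" "y \<in> \<beta> d" "{x,y} \<in> EG" using mm e(1) cd unfolding minor_model_def by blast
      have "{u,v} = {?f c, ?f d}" using e cd by auto
      hence "(u = ?f c \<and> v = ?f d) \<or> (u = ?f d \<and> v = ?f c)" by (auto simp: doubleton_eq_iff)
      moreover have x': "x \<in> ?\<beta> (?f c)" "y \<in> ?\<beta> (?f d)" using xy bsub by blast+
      moreover have "{y,x} \<in> EG" using xy(3) by (simp add: insert_commute)
      ultimately show "\<exists>x\<in>?\<beta> u. \<exists>y\<in>?\<beta> v. {x, y} \<in> EG"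
        using xy(3) by blast
    qed
  qed
  have term': "\<forall>t \<in> S1 \<union> T1 \<union> S2 \<union> T2. t \<in> VH - {b} \<and> ?\<beta> t = {t}"
    using trm na nb unfolding contract_branch_def by auto
  show ?thesis unfolding good_minor_def contract_V_def using g' mm' term' r1 r2 by blast
qed

lemma term_deg:
  assumes G: "graph VG EG" and gm: "good_minor VG EG S1 T1 S2 T2 k VH EH \<beta>"
    and deg: "\<forall>v \<in> S1 \<union> T1 \<union> S2 \<union> T2. degree EG v = 1"
    and t: "t \<in> S1 \<union> T1 \<union> S2 \<union> T2" and p: "{t,p} \<in> EH" and q: "{t,q} \<in> EH"
  shows "p = q"
proof (rule ccontr)
  assume pq: "p \<noteq> q"
  have g: "graph VH EH" and mm: "minor_model VG EG VH EH \<beta>" and bt: "\<beta> t = {t}"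
    using gm t unfolding good_minor_def by auto
  have pV: "p \<in> VH" "q \<in> VH" using g p q unfolding graph_def by auto
  have ed: "\<forall>u v. {u,v} \<in> EH \<longrightarrow> (\<exists>x\<in>\<beta> u. \<exists>y\<in>\<beta> v. {x,y} \<in> EG)"
    and dj: "\<forall>u\<in>VH. \<forall>v\<in>VH. u \<noteq> v \<longrightarrow> \<beta> u \<inter> \<beta> v = {}"
    using mm unfolding minor_model_def by blast+
  obtain x' x where "x' \<in> \<beta> t" "x \<in> \<beta> p" "{x',x} \<in> EG" using ed p by blast
  hence x: "x \<in> \<beta> p" "{t,x} \<in> EG" using bt by auto
  obtain z' z where "z' \<in> \<beta> t" "z \<in> \<beta> q" "{z',z} \<in> EG" using ed q by blast
  hence z: "z \<in> \<beta> q" "{t,z} \<in> EG" using bt by auto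
  have "\<beta> p \<inter> \<beta> q = {}" using dj pV pq by blast
  hence xz: "x \<noteq> z" using x z by blast
  have c2: "card {t,x} = 2" "card {t,z} = 2" using G x z unfolding graph_def by blast+
  have xt: "x \<noteq> t" using c2(1) by (cases "x = t") simp_all
  have zt: "z \<noteq> t" using c2(2) by (cases "z = t") simp_all
  have ne: "{t,x} \<noteq> {t,z}" using xz xt zt by (simp add: doubleton_eq_iff)
  have "EG \<subseteq> Pow VG" "finite VG" using G unfolding graph_def by auto
  hence fin: "finite EG" by (meson finite_Pow_iff finite_subset)
  have "{{t,x},{t,z}} \<subseteq> {e\<in>EG. t \<in> e}" using x z by auto
  hence "card {{t,x},{t,z}} \<le> degree EG t" unfolding degree_def using fin by (simp add: card_mono)
  moreover have "card {{t,x},{t,z}} = 2" using ne by simp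
  ultimately show False using deg t by auto
qed

lemma mid_pred:
  assumes "routing V E S T k R" "finite S" "card S = k" "dir_edge R v w" "v \<notin> S"
  shows "\<exists>z. dir_edge R z v"
proof -
  obtain P i where P: "P \<in> R" "Suc i < length P" "P ! i = v" "P ! Suc i = w"
    using assms(4) unfolding dir_edge_def by blast
  have "hd P \<in> S" using assms(1) P(1) unfolding routing_def by auto
  show ?thesis
  proof (cases i)
    case 0
    moreover have "P \<noteq> []" using P(2) by auto
    ultimately have "hd P = v" using P by (simp add: hd_conv_nth)
    thus ?thesis using \<open>hd P \<in> S\<close> assms(5) by simp
  next
    case (Suc j)
    hence "Suc j < length P \<and> P ! j = P ! j \<and> P ! Suc j = v" using P by auto
    hence "dir_edge R (P ! j) v" using P(1) unfolding dir_edge_def by blast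
    thus ?thesis by blast
  qed
qed

lemma two_cycle_contra:
  assumes G: "graph VG EG"
    and dS1T1: "S1 \<inter> T1 = {}" and dS1T2: "S1 \<inter> T2 = {}" and dT1S2: "T1 \<inter> S2 = {}" and dS2T2: "S2 \<inter> T2 = {}"
    and deg: "\<forall>v \<in> S1 \<union> T1 \<union> S2 \<union> T2. degree EG v = 1"
    and fS1: "finite S1" "card S1 = k" and fT1: "finite T1" "card T1 = k"
    and fS2: "finite S2" "card S2 = k" and fT2: "finite T2" "card T2 = k"
    and mm: "minimal_minor VG EG S1 T1 S2 T2 k VH EH \<beta>"
    and R: "routing VH EH S1 T1 k R" and B: "routing VH EH S2 T2 k B"
    and ab: "dir_edge R a b" and ba: "dir_edge B b a"
  shows False
proof -
  have gm: "good_minor VG EG S1 T1 S2 T2 k VH EH \<beta>" using mm unfolding minimal_minor_def by blast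
  have g: "graph VH EH" using gm unfolding good_minor_def by blast
  have eab: "{a,b} \<in> EH" "a \<noteq> b" using de_edge[OF R ab] by auto
  have eba: "{b,a} \<in> EH" using eab by (simp add: insert_commute)
  note nt = term_deg[OF G gm deg]
  have na: "a \<notin> S1 \<union> T1 \<union> S2 \<union> T2"
  proof
    assume aT: "a \<in> S1 \<union> T1 \<union> S2 \<union> T2"
    show False
    proof (cases "a \<in> S1")
      case True
      hence "a \<notin> T2" using dS1T2 by auto
      then obtain z where z: "dir_edge B a z" using mid_succ[OF B ba] by blast
      have "z \<noteq> b" using de_no2cycle[OF B ba] z by blast
      moreover have "{a,z} \<in> EH" using de_edge[OF B z] by blast
      ultimately show False using nt[OF aT eab(1)] by blast
    next
      case nS1: False
      show False
      proof (cases "a \<in> T2")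
        case True
        obtain z where z: "dir_edge R z a" using mid_pred[OF R fS1 ab nS1] by blast
        have "z \<noteq> b" using de_no2cycle[OF R ab] z by blast
        moreover have "{a,z} \<in> EH" using de_edge[OF R z] by (simp add: insert_commute)
        ultimately show False using nt[OF aT eab(1)] by blast
      next
        case False
        hence "a \<in> T1 \<or> a \<in> S2" using aT nS1 by blast
        thus False using T_no_succ[OF R fT1 _ ab] S_no_pred[OF B fS2 _ ba] by blast
      qed
    qed
  qed
  have nb: "b \<notin> S1 \<union> T1 \<union> S2 \<union> T2"
  proof
    assume bT: "b \<in> S1 \<union> T1 \<union> S2 \<union> T2"
    show False
    proof (cases "b \<in> T1")
      case True
      hence "b \<notin> S2" using dT1S2 by auto
      then obtain z where z: "dir_edge B z b" using mid_pred[OF B fS2 ba] by blast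
      have "z \<noteq> a" using de_no2cycle[OF B ba] z by blast
      moreover have "{b,z} \<in> EH" using de_edge[OF B z] by (simp add: insert_commute)
      ultimately show False using nt[OF bT eba] by blast
    next
      case nT1: False
      show False
      proof (cases "b \<in> S2")
        case True
        obtain z where z: "dir_edge R b z" using mid_succ[OF R ab nT1] by blast
        have "z \<noteq> a" using de_no2cycle[OF R ab] z by blast
        moreover have "{b,z} \<in> EH" using de_edge[OF R z] by blast
        ultimately show False using nt[OF bT eba] by blast
      next
        case False
        hence "b \<in> S1 \<or> b \<in> T2" using bT nT1 by blast
        thus False using S_no_pred[OF R fS1 _ ab] T_no_succ[OF B fT2 _ ba] by blast
      qed
    qed
  qed
  have r1: "routable (VH - {b}) (contract_E EH a b) S1 T1 k"
    using contract_routing[OF g R eab(2) _ _ disjI1[OF ab]] nb unfolding routable_def by blast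
  have r2: "routable (VH - {b}) (contract_E EH a b) S2 T2 k"
    using contract_routing[OF g B eab(2) _ _ disjI2[OF ba]] nb unfolding routable_def by blast
  have "good_minor VG EG S1 T1 S2 T2 k (contract_V VH a b) (contract_E EH a b) (contract_branch \<beta> a b)"
    by (rule contract_good[OF gm eab(1) na nb r1 r2])
  thus False using mm eab(1) unfolding minimal_minor_def by blast
qed

lemma core:
  assumes G: "graph VG EG"
    and dS1T1: "S1 \<inter> T1 = {}" and dS1T2: "S1 \<inter> T2 = {}" and dT1S2: "T1 \<inter> S2 = {}" and dS2T2: "S2 \<inter> T2 = {}"
    and deg: "\<forall>v \<in> S1 \<union> T1 \<union> S2 \<union> T2. degree EG v = 1"
    and fS1: "finite S1" "card S1 = k" and fT1: "finite T1" "card T1 = k"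
    and fS2: "finite S2" "card S2 = k" and fT2: "finite T2" "card T2 = k"
    and mm: "minimal_minor VG EG S1 T1 S2 T2 k VH EH \<beta>"
    and R: "routing VH EH S1 T1 k R" and B: "routing VH EH S2 T2 k B"
    and L2: "L \<ge> 2"
    and yinj: "\<And>a b. a < L \<Longrightarrow> b < L \<Longrightarrow> y a = y b \<Longrightarrow> a = b"
    and yL: "y L = y 0"
    and red: "\<And>t. t < L \<Longrightarrow> even t \<Longrightarrow> dir_edge R (y t) (y (Suc t))"
    and blue: "\<And>t. t < L \<Longrightarrow> odd t \<Longrightarrow> dir_edge B (y t) (y (Suc t))"
  shows False
proof (cases "L = 2")
  case True
  have "dir_edge R (y 0) (y 1)" using red[of 0] True by simp
  moreover have "dir_edge B (y 1) (y 0)" using blue[of 1] True yL by (simp add: numeral_2_eq_2)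
  ultimately show False
    using two_cycle_contra[OF G dS1T1 dS1T2 dT1S2 dS2T2 deg fS1 fT1 fS2 fT2 mm R B] by blast
next
  case False
  hence "L \<ge> 3" using L2 by simp
  thus False using cycle_delete_contra[OF mm R B fS1 fT1 dS1T1 _ yinj yL red blue] by blast
qed

lemma good_minor_swap:
  "good_minor VG EG S1 T1 S2 T2 k VH EH \<beta> \<longleftrightarrow> good_minor VG EG S2 T2 S1 T1 k VH EH \<beta>"
proof -
  have "S1 \<union> T1 \<union> S2 \<union> T2 = S2 \<union> T2 \<union> S1 \<union> T1" by blast
  thus ?thesis unfolding good_minor_def by auto
qed

lemma minimal_minor_swap:
  "minimal_minor VG EG S1 T1 S2 T2 k VH EH \<beta> \<Longrightarrow> minimal_minor VG EG S2 T2 S1 T1 k VH EH \<beta>"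
  unfolding minimal_minor_def using good_minor_swap by metis

theorem claim2p4:
  fixes VG :: "'a set" and EG :: "'a set set" and S1 T1 S2 T2 :: "'a set" and k :: nat
    and VH :: "'a set" and EH :: "'a set set" and \<beta> :: "'a \<Rightarrow> 'a set"
    and R B :: "'a list set" and c :: bool and xs :: "'a list"
  assumes "graph VG EG"
    and "S1 \<subseteq> VG" "T1 \<subseteq> VG" "S2 \<subseteq> VG" "T2 \<subseteq> VG"
    and "card S1 = k" "card T1 = k" "card S2 = k" "card T2 = k"
    and "S1 \<inter> T1 = {}" "S1 \<inter> S2 = {}" "S1 \<inter> T2 = {}"
        "T1 \<inter> S2 = {}" "T1 \<inter> T2 = {}" "S2 \<inter> T2 = {}"
    and "\<forall>v \<in> S1 \<union> T1 \<union> S2 \<union> T2. degree EG v = 1"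
    and "routable VG EG S1 T1 k" "routable VG EG S2 T2 k"
    and "minimal_minor VG EG S1 T1 S2 T2 k VH EH \<beta>"
    and "routing VH EH S1 T1 k R"
    and "routing VH EH S2 T2 k B"
    and "chain R B c xs"
  shows "distinct xs"
proof (rule ccontr)
  assume nd: "\<not> distinct xs"
  note G = assms(1)
  have finVG: "finite VG" using G unfolding graph_def by blast
  have fin: "finite S1" "finite T1" "finite S2" "finite T2"
    using finite_subset[OF assms(2) finVG] finite_subset[OF assms(3) finVG]
      finite_subset[OF assms(4) finVG] finite_subset[OF assms(5) finVG] by auto
  note R = assms(20) and B = assms(21) and mm = assms(19)
  have ch: "\<And>j. Suc j < length xs \<Longrightarrow> (if (even j \<longleftrightarrow> c) then dir_edge R (xs ! j) (xs ! Suc j)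
         else dir_edge B (xs ! j) (xs ! Suc j))" using assms(22) unfolding chain_def by blast
  let ?P = "\<lambda>d. \<exists>i. 0 < d \<and> i + d < length xs \<and> xs ! i = xs ! (i + d)"
  have ex: "\<exists>d. ?P d"
  proof -
    obtain a b where ab: "a < length xs" "b < length xs" "a \<noteq> b" "xs ! a = xs ! b"
      using nd unfolding distinct_conv_nth by blast
    show ?thesis
    proof (cases "a < b")
      case True thus ?thesis using ab by (intro exI[of _ "b - a"] exI[of _ a]) auto
    next
      case False thus ?thesis using ab by (intro exI[of _ "a - b"] exI[of _ b]) auto
    qed
  qed
  define D where "D = (LEAST d. ?P d)"
  have PD: "?P D" unfolding D_def by (rule LeastI_ex[OF ex])
  then obtain i where i: "0 < D" "i + D < length xs" "xs ! i = xs ! (i + D)" by blast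
  have minD: "\<And>d. d < D \<Longrightarrow> \<not> ?P d" unfolding D_def using not_less_Least by blast
  define y where "y n = xs ! (i + n)" for n
  have yinj: "a = b" if "a < D" "b < D" "y a = y b" for a b
  proof (rule ccontr)
    assume "a \<noteq> b"
    show False
    proof (cases "a < b")
      case True
      hence "?P (b - a)" using that i by (intro exI[of _ "i + a"]) (auto simp: y_def)
      moreover have "b - a < D" using that(2) by linarith
      ultimately show False using minD by blast
    next
      case False
      hence "?P (a - b)" using that i \<open>a \<noteq> b\<close> by (intro exI[of _ "i + b"]) (auto simp: y_def)
      moreover have "a - b < D" using that(1) by linarith
      ultimately show False using minD by blast
    qed
  qed
  have yL: "y D = y 0" using i unfolding y_def by simp
  have edge: "(if (even (i + t) \<longleftrightarrow> c) then dir_edge R (y t) (y (Suc t))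
         else dir_edge B (y t) (y (Suc t)))" if t: "t < D" for t
  proof -
    have "Suc (i + t) < length xs" using i t by simp
    from ch[OF this] show ?thesis by (simp add: y_def)
  qed
  have D2: "D \<ge> 2"
  proof (rule ccontr)
    assume "\<not> D \<ge> 2"
    hence "D = 1" using i by simp
    hence "y 1 = y 0" using yL by simp
    moreover have "dir_edge R (y 0) (y 1) \<or> dir_edge B (y 0) (y 1)" using edge[of 0] \<open>D = 1\<close> by (simp split: if_splits)
    ultimately show False using de_edge[OF R] de_edge[OF B] by fastforce
  qed
  show False
  proof (cases "even i \<longleftrightarrow> c")
    case True
    have red: "\<And>t. t < D \<Longrightarrow> even t \<Longrightarrow> dir_edge R (y t) (y (Suc t))"
    proof -
      fix t assume "t < D" "even t" thus "dir_edge R (y t) (y (Suc t))" using edge[of t] True by auto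
    qed
    have blue: "\<And>t. t < D \<Longrightarrow> odd t \<Longrightarrow> dir_edge B (y t) (y (Suc t))"
    proof -
      fix t assume "t < D" "odd t" thus "dir_edge B (y t) (y (Suc t))" using edge[of t] True by auto
    qed
    show False using core[OF G assms(10,12,13,15,16) fin(1) assms(6) fin(2) assms(7) fin(3) assms(8)
        fin(4) assms(9) mm R B D2 yinj yL red blue] by blast
  next
    case False
    have red: "\<And>t. t < D \<Longrightarrow> even t \<Longrightarrow> dir_edge B (y t) (y (Suc t))"
    proof -
      fix t assume "t < D" "even t" thus "dir_edge B (y t) (y (Suc t))" using edge[of t] False by auto
    qed
    have blue: "\<And>t. t < D \<Longrightarrow> odd t \<Longrightarrow> dir_edge R (y t) (y (Suc t))"
    proof -
      fix t assume "t < D" "odd t" thus "dir_edge R (y t) (y (Suc t))" using edge[of t] False by auto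
    qed
    have d1: "S2 \<inter> T1 = {}" "T2 \<inter> S1 = {}" using assms(11-13) by blast+
    have deg': "\<forall>v \<in> S2 \<union> T2 \<union> S1 \<union> T1. degree EG v = 1" using assms(16) by blast
    show False using core[OF G assms(15) d1 assms(10) deg' fin(3) assms(8) fin(4) assms(9)
        fin(1) assms(6) fin(2) assms(7) minimal_minor_swap[OF mm] B R D2 yinj yL red blue] by blast
  qed
qed

end
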